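(* For a rearrangement $\tau:\mathcal D\to\mathcal D$ with induced operator $Th_I=h_{\tau(I)}$, the following are equivalent: (i) $T:\mathrm{BMO}\to\mathrm{BMO}$ is bounded; (ii) there exists $M\ge1$ such that $[\![\tau(\mathcal E)]\!]\le M[\![\mathcal E]\!]$ for every $\mathcal E\subset\mathcal D$; (iii) there exists $M\ge1$ such that $[\![\tau(\mathcal E)]\!]\le M$ for every $\mathcal E\subset\mathcal D$ with $[\![\mathcal E]\!]\le 4$.
   Context: $\mathcal D$ is the collection of dyadic subintervals of $[0,1]$; a rearrangement is an injective map $\tau:\mathcal D\to\mathcal D$. $h_I$ is the $L^\infty$-normalized Haar function ($1$ on the left half of $I$, $-1$ on the right half, $0$ outside). For $x=\sum x_Ih_I$, $\|x\|=\sup_{J\in\mathcal D}\big(\frac1{|J|}\sum_{I\subseteq J}x_I^2|I|\big)^{1/2}$; $\mathrm{BMO}=\{x:\|x\|<\infty\}$ (dyadic BMO). For $\mathcal L\subset\mathcal D$, $[\![\mathcal L]\!]=\sup_{J\in\mathcal D}\frac1{|J|}\sum_{I\in\mathcal L,I\subseteq J}|I|$. *)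

theory Defs
  imports "HOL-Analysis.Analysis"
begin

text \<open>Dyadic subintervals of [0,1]: the pair (n,k) with k < 2^n stands for
  the interval [k/2^n, (k+1)/2^n) of length 2^(-n).\<close>

type_synonym dint = "nat \<times> nat"

definition dyadic :: "dint set" where
  "dyadic = {(n, k). k < 2 ^ n}"

definition dlen :: "dint \<Rightarrow> real" where
  "dlen I = (1 / 2) ^ fst I"

definition dsub :: "dint \<Rightarrow> dint \<Rightarrow> bool" where
  "dsub I J \<longleftrightarrow> fst J \<le> fst I \<and> snd I div 2 ^ (fst I - fst J) = snd J"

definition ennsqrt :: "ennreal \<Rightarrow> ennreal" where
  "ennsqrt e = (if e = \<infinity> then \<infinity> else ennreal (sqrt (enn2real e)))"

text \<open>An element x = sum x_I h_I is identified with its Haar coefficient function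
  (only values on dyadic matter). Dyadic BMO norm:
  sup over J of ((1/|J|) sum_{I subset J} x_I^2 |I|)^(1/2).\<close>
definition bmo_norm :: "(dint \<Rightarrow> real) \<Rightarrow> ennreal" where
  "bmo_norm x = (SUP J\<in>dyadic. ennsqrt
      ((\<integral>\<^sup>+ I. ennreal ((x I)\<^sup>2 * dlen I) \<partial>count_space {I \<in> dyadic. dsub I J})
        / ennreal (dlen J)))"

definition BMO :: "(dint \<Rightarrow> real) set" where
  "BMO = {x. bmo_norm x < \<infinity>}"

definition carleson :: "dint set \<Rightarrow> ennreal" where
  "carleson L = (SUP J\<in>dyadic.
      (\<integral>\<^sup>+ I. ennreal (dlen I) \<partial>count_space {I \<in> L \<inter> dyadic. dsub I J})
        / ennreal (dlen J))"

text \<open>Rearrangement operator T h_I = h_{tau(I)} acting on coefficient functions.\<close>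
definition rearr_op :: "(dint \<Rightarrow> dint) \<Rightarrow> (dint \<Rightarrow> real) \<Rightarrow> (dint \<Rightarrow> real)" where
  "rearr_op \<tau> x = (\<lambda>J. if J \<in> \<tau> ` dyadic then x (inv_into dyadic \<tau> J) else 0)"

end

theory Submission
  imports Defs
begin


lemma chain_count:
  fixes c :: "nat \<Rightarrow> nat" and N j l L :: nat
  assumes N: "N > 0"
  defines "Q \<equiv> \<lambda>n. (\<Sum>m<n. c m)"
  shows "real (card {n \<in> {l..L}. \<exists>m. Q n \<le> m \<and> m < Q (Suc n) \<and> m mod N = j})
           \<le> (\<Sum>n\<in>{l..L}. real (c n)) / N + 2"
proof -
  define S where "S = {n \<in> {l..L}. \<exists>m. Q n \<le> m \<and> m < Q (Suc n) \<and> m mod N = j}"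
  have Qmono: "Q a \<le> Q b" if "a \<le> b" for a b
    unfolding Q_def using that by (intro sum_mono2) auto
  show ?thesis
  proof (cases "S = {}")
    case True
    then show ?thesis unfolding S_def[symmetric] by (simp add: sum_nonneg)
  next
    case False
    then have lL: "l \<le> L" unfolding S_def by auto
    define g where "g n = (SOME m. Q n \<le> m \<and> m < Q (Suc n) \<and> m mod N = j)" for n
    have g: "Q n \<le> g n \<and> g n < Q (Suc n) \<and> g n mod N = j" if "n \<in> S" for n
    proof -
      have "\<exists>m. Q n \<le> m \<and> m < Q (Suc n) \<and> m mod N = j" using that unfolding S_def by auto
      then show ?thesis unfolding g_def by (rule someI_ex)
    qed
    have inj: "inj_on (\<lambda>n. g n div N) S"
    proof (rule inj_onI)
      fix a b assume a: "a \<in> S" and b: "b \<in> S" and e: "g a div N = g b div N"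
      have "g a = g b"
        using g[OF a] g[OF b] e by (metis div_mult_mod_eq)
      show "a = b"
      proof (rule ccontr)
        assume "a \<noteq> b"
        then consider "Suc a \<le> b" | "Suc b \<le> a" by linarith
        then show False
        proof cases
          case 1 then show False using g[OF a] g[OF b] \<open>g a = g b\<close> Qmono[OF 1] by linarith
        next
          case 2 then show False using g[OF a] g[OF b] \<open>g a = g b\<close> Qmono[OF 2] by linarith
        qed
      qed
    qed
    have sub: "(\<lambda>n. g n div N) ` S \<subseteq> {Q l div N .. Q (Suc L) div N}"
    proof
      fix y assume "y \<in> (\<lambda>n. g n div N) ` S"
      then obtain n where n: "n \<in> S" "y = g n div N" by auto
      have "l \<le> n" "n \<le> L" using n unfolding S_def by auto
      then have "Q l \<le> g n" "g n \<le> Q (Suc L)" using g[OF n(1)] Qmono[of l n] Qmono[of "Suc n" "Suc L"] by auto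
      then show "y \<in> {Q l div N .. Q (Suc L) div N}" using n by (auto intro: div_le_mono)
    qed
    have "card S = card ((\<lambda>n. g n div N) ` S)" using inj by (simp add: card_image)
    also have "\<dots> \<le> card {Q l div N .. Q (Suc L) div N}" using sub by (intro card_mono) auto
    also have "\<dots> = Suc (Q (Suc L) div N) - Q l div N" by simp
    finally have c1: "real (card S) \<le> real (Q (Suc L) div N) + 1 - real (Q l div N)"
      using div_le_mono[OF Qmono[of l "Suc L"], of N] lL by linarith
    have d1: "real (Q (Suc L) div N) \<le> real (Q (Suc L)) / N"
    proof -
      have "Q (Suc L) div N * N \<le> Q (Suc L)" by simp
      then have "real (Q (Suc L) div N) * N \<le> real (Q (Suc L))" by (metis of_nat_le_iff of_nat_mult)
      then show ?thesis using N by (simp add: field_simps)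
    qed
    have d2: "real (Q l) / N - 1 \<le> real (Q l div N)"
    proof -
      have m: "Q l mod N < N" using N by simp
      have "Q l = Q l div N * N + Q l mod N" by simp
      then have "real (Q l) = real (Q l div N) * N + real (Q l mod N)"
        by (metis of_nat_add of_nat_mult)
      moreover have "real (Q l mod N) < real N" using m by simp
      ultimately have "real (Q l) < (real (Q l div N) + 1) * N" by (simp add: algebra_simps)
      then show ?thesis using N by (simp add: field_simps)
    qed
    have "Q (Suc L) = Q l + (\<Sum>n\<in>{l..L}. c n)"
    proof -
      have "{..<Suc L} = {..<l} \<union> {l..L}" using lL by auto
      moreover have "sum c ({..<l} \<union> {l..L}) = sum c {..<l} + sum c {l..L}"
        by (rule sum.union_disjoint) auto
      ultimately show ?thesis unfolding Q_def by simp
    qed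
    then have "real (Q (Suc L)) = real (Q l) + (\<Sum>n\<in>{l..L}. real (c n))" by simp
    then have "real (Q (Suc L)) / N - real (Q l) / N = (\<Sum>n\<in>{l..L}. real (c n)) / N"
      by (simp add: add_divide_distrib)
    then show ?thesis unfolding S_def[symmetric] using c1 d1 d2 by linarith
  qed
qed



lemma dsub_refl: "dsub I I" by (simp add: dsub_def)

lemma div_div_pow: assumes "b \<le> (a::nat)" "c \<le> b"
  shows "(k::nat) div 2 ^ (a - b) div 2 ^ (b - c) = k div 2 ^ (a - c)"
proof -
  have "a - c = (a - b) + (b - c)" using assms by simp
  then have "(2::nat) ^ (a - c) = 2 ^ (a - b) * 2 ^ (b - c)" by (simp add: power_add)
  then show ?thesis by (simp add: div_mult2_eq)
qed

lemma dsub_trans: assumes "dsub a b" "dsub b c" shows "dsub a c"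
proof -
  have "snd a div 2 ^ (fst a - fst c) = snd a div 2 ^ (fst a - fst b) div 2 ^ (fst b - fst c)"
    using assms unfolding dsub_def
    by (intro div_div_pow[symmetric]) auto
  then show ?thesis using assms unfolding dsub_def by auto
qed

definition lv :: "nat \<Rightarrow> dint \<Rightarrow> dint set" where
  "lv L I = {l. fst l = L \<and> dsub l I}"

lemma div_eq_iff_range: "(0::nat) < d \<Longrightarrow> k div d = q \<longleftrightarrow> k \<in> {q * d ..< (q+1) * d}"
proof
  assume d: "0 < d" and "k div d = q"
  moreover have "k = k div d * d + k mod d" by simp
  moreover have "k mod d < d" using d by simp
  ultimately show "k \<in> {q * d ..< (q+1) * d}" by (simp add: algebra_simps)
next
  assume "0 < d" "k \<in> {q * d ..< (q+1) * d}"
  then show "k div d = q" by (intro div_nat_eqI) (auto simp: algebra_simps)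
qed

lemma lv_eq: assumes "fst I \<le> L"
  shows "lv L I = (\<lambda>k. (L,k)) ` {snd I * 2^(L - fst I) ..< (snd I + 1) * 2^(L - fst I)}"
  using div_eq_iff_range[of "2^(L - fst I)"] unfolding lv_def dsub_def using assms
  by (auto simp: image_iff)

lemma finite_lv: "fst I \<le> L \<Longrightarrow> finite (lv L I)" by (simp add: lv_eq)

lemma card_lv: assumes "fst I \<le> L" shows "card (lv L I) = 2 ^ (L - fst I)"
proof -
  have "card (lv L I) = card {snd I * 2^(L - fst I) ..< (snd I + 1) * 2^(L - fst I)}"
    unfolding lv_eq[OF assms] by (rule card_image) (auto simp: inj_on_def)
  then show ?thesis by (simp add: algebra_simps)
qed

lemma dlen_lv: assumes "fst I \<le> L" shows "dlen I = (\<Sum>l\<in>lv L I. (1/2::real)^L)"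
proof -
  have "(1/2::real)^fst I = 2^(L - fst I) * (1/2)^L"
  proof -
    have "(1/2::real)^L = (1/2)^(L - fst I) * (1/2)^fst I" using assms
      by (metis le_add_diff_inverse2 power_add)
    then show ?thesis by (simp add: power_one_over)
  qed
  then show ?thesis using card_lv[OF assms] by (simp add: dlen_def)
qed

lemma lv_dyadic: assumes "I \<in> dyadic" "fst I \<le> L" shows "lv L I \<subseteq> dyadic"
proof
  fix l assume "l \<in> lv L I"
  then obtain k where l: "l = (L,k)" "k < (snd I + 1) * 2^(L - fst I)" using lv_eq[OF assms(2)] by auto
  have "snd I + 1 \<le> 2 ^ fst I" using assms(1) by (auto simp: dyadic_def)
  then have "(snd I + 1) * 2^(L - fst I) \<le> 2 ^ fst I * 2 ^ (L - fst I)" by (rule mult_right_mono) simp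
  also have "\<dots> = 2 ^ L" using assms(2) by (simp add: power_add[symmetric])
  finally show "l \<in> dyadic" using l by (simp add: dyadic_def)
qed

definition anc :: "dint \<Rightarrow> nat \<Rightarrow> dint" where
  "anc l n = (n, snd l div 2 ^ (fst l - n))"

lemma inj_anc: "inj (anc l)" by (auto simp: inj_def anc_def)

lemma anc_anc: assumes "m \<le> n" "n \<le> fst l" shows "anc (anc l n) m = anc l m"
proof -
  have "snd l div 2 ^ (fst l - n) div 2 ^ (n - m) = snd l div 2 ^ (fst l - m)"
    using assms by (simp add: div_div_pow)
  then show ?thesis by (simp add: anc_def)
qed

lemma chain_set: assumes "l \<in> lv L K" "fst K \<le> L"
  shows "{I. dsub l I \<and> dsub I K} = anc l ` {fst K..L}"
proof
  show "{I. dsub l I \<and> dsub I K} \<subseteq> anc l ` {fst K..L}"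
  proof
    fix I assume "I \<in> {I. dsub l I \<and> dsub I K}"
    then have "dsub l I" "dsub I K" by auto
    then have "I = anc l (fst I)" "fst I \<in> {fst K..L}" using assms unfolding dsub_def anc_def lv_def
      by (auto simp: prod_eq_iff)
    then show "I \<in> anc l ` {fst K..L}" by blast
  qed
next
  show "anc l ` {fst K..L} \<subseteq> {I. dsub l I \<and> dsub I K}"
  proof
    fix I assume "I \<in> anc l ` {fst K..L}"
    then obtain n where n: "n \<in> {fst K..L}" "I = anc l n" by auto
    have fl: "fst l = L" using assms by (simp add: lv_def)
    have 1: "dsub l I" using n fl by (simp add: anc_def dsub_def)
    have "dsub l K" using assms by (simp add: lv_def)
    then have sK: "snd K = snd l div 2^(L - fst K)" using fl by (simp add: dsub_def)
    have fI: "fst I = n" and sI: "snd I = snd l div 2^(L - n)" using n fl by (simp_all add: anc_def)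
    have "snd I div 2^(n - fst K) = snd l div 2^(L - fst K)"
      unfolding sI using n by (intro div_div_pow) auto
    then have "dsub I K" using n sK fI by (simp add: dsub_def)
    then show "I \<in> {I. dsub l I \<and> dsub I K}" using 1 by auto
  qed
qed

lemma leaf_sum:
  fixes f :: "dint \<Rightarrow> real"
  assumes "finite X" "\<And>I. I \<in> X \<Longrightarrow> fst I \<le> L" "fst K \<le> L"
  shows "(\<Sum>I\<in>{I\<in>X. dsub I K}. f I * dlen I)
       = (\<Sum>l\<in>lv L K. (1/2)^L * (\<Sum>I\<in>{I\<in>X. dsub l I \<and> dsub I K}. f I))"
proof -
  have "(\<Sum>I\<in>{I\<in>X. dsub I K}. f I * dlen I) = (\<Sum>I\<in>{I\<in>X. dsub I K}. (\<Sum>l\<in>{l \<in> lv L K. dsub l I}. f I * (1/2)^L))"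
  proof (rule sum.cong[OF refl])
    fix I assume I: "I \<in> {I\<in>X. dsub I K}"
    have "lv L I = {l \<in> lv L K. dsub l I}" 
    proof
      show "lv L I \<subseteq> {l \<in> lv L K. dsub l I}"
        using I dsub_trans[of _ I K] unfolding lv_def by blast
      show "{l \<in> lv L K. dsub l I} \<subseteq> lv L I" unfolding lv_def by blast
    qed
    then show "f I * dlen I = (\<Sum>l\<in>{l \<in> lv L K. dsub l I}. f I * (1/2)^L)"
      using dlen_lv[of I L] assms I by (simp add: sum_distrib_left)
  qed
  also have "\<dots> = (\<Sum>l\<in>lv L K. \<Sum>I\<in>{I\<in>{I\<in>X. dsub I K}. dsub l I}. f I * (1/2)^L)"
    by (rule sum.swap_restrict) (use assms finite_lv in auto)
  also have "\<dots> = (\<Sum>l\<in>lv L K. (1/2)^L * (\<Sum>I\<in>{I\<in>X. dsub l I \<and> dsub I K}. f I))"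
  proof (rule sum.cong[OF refl])
    fix l assume "l \<in> lv L K"
    have e: "{I\<in>{I\<in>X. dsub I K}. dsub l I} = {I\<in>X. dsub l I \<and> dsub I K}" by blast
    show "(\<Sum>I\<in>{I\<in>{I\<in>X. dsub I K}. dsub l I}. f I * (1/2)^L) = (1/2)^L * (\<Sum>I\<in>{I\<in>X. dsub l I \<and> dsub I K}. f I)"
      unfolding e by (simp add: sum_distrib_left mult.commute)
  qed
  finally show ?thesis .
qed

lemma sum_lv: assumes "fst K \<le> L" shows "(\<Sum>l\<in>lv L K. (1/2::real)^L) = dlen K"
  using dlen_lv[OF assms] by simp



lemma card_mod_image:
  fixes N P c :: nat
  assumes "c \<le> N"
  shows "card {j\<in>{..<N}. \<exists>m. P \<le> m \<and> m < P + c \<and> m mod N = j} = c"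
proof -
  have N: "N > 0 \<or> c = 0" using assms by auto
  have e: "{j\<in>{..<N}. \<exists>m. P \<le> m \<and> m < P + c \<and> m mod N = j} = (\<lambda>m. m mod N) ` {P..<P+c}"
  proof
    show "{j\<in>{..<N}. \<exists>m. P \<le> m \<and> m < P + c \<and> m mod N = j} \<subseteq> (\<lambda>m. m mod N) ` {P..<P+c}" by auto
    show "(\<lambda>m. m mod N) ` {P..<P+c} \<subseteq> {j\<in>{..<N}. \<exists>m. P \<le> m \<and> m < P + c \<and> m mod N = j}"
      using N by auto
  qed
  have "inj_on (\<lambda>m. m mod N) {P..<P+c}"
  proof (rule inj_onI)
    fix a b assume a: "a \<in> {P..<P+c}" and b: "b \<in> {P..<P+c}" and ab: "a mod N = b mod N"
    show "a = b"
    proof (rule ccontr)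
      assume "a \<noteq> b"
      then consider "a < b" | "b < a" by linarith
      then show False
      proof cases
        case 1
        then have "N dvd b - a" using mod_eq_dvd_iff_nat[of a b N] ab by simp
        moreover have "0 < b - a" "b - a < N" using 1 a b assms by auto
        ultimately show False by (meson nat_dvd_not_less)
      next
        case 2
        then have "N dvd a - b" using mod_eq_dvd_iff_nat[of b a N] ab by simp
        moreover have "0 < a - b" "a - b < N" using 2 a b assms by auto
        ultimately show False by (meson nat_dvd_not_less)
      qed
    qed
  qed
  then show ?thesis unfolding e by (simp add: card_image)
qed

lemma rounding:
  fixes w \<nu> :: "dint \<Rightarrow> real" and G :: "dint set" and B :: real
  assumes G: "finite G" "G \<subseteq> dyadic"
    and w01: "\<And>I. I \<in> G \<Longrightarrow> 0 \<le> w I \<and> w I \<le> 1"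
    and wC: "\<And>K. K \<in> dyadic \<Longrightarrow> (\<Sum>I\<in>{I\<in>G. dsub I K}. w I * dlen I) \<le> dlen K"
    and \<nu>: "\<And>I. I \<in> G \<Longrightarrow> 0 \<le> \<nu> I"
    and hyp: "\<And>E. E \<subseteq> G \<Longrightarrow> (\<And>K. K \<in> dyadic \<Longrightarrow> (\<Sum>I\<in>{I\<in>E. dsub I K}. dlen I) \<le> 3 * dlen K)
                 \<Longrightarrow> (\<Sum>I\<in>E. \<nu> I) \<le> B"
  shows "(\<Sum>I\<in>G. w I * \<nu> I) \<le> B"
proof -
  have key: "(\<Sum>I\<in>G. w I * \<nu> I) \<le> B + (\<Sum>I\<in>G. \<nu> I) / N" if N: "N > 0" for N :: nat
  proof -
    define c where "c I = (if I \<in> G then nat \<lfloor>N * w I\<rfloor> else 0)" for I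
    define P where "P I = (\<Sum>m<fst I. c (anc I m))" for I
    define E where "E j = {I\<in>G. \<exists>m. P I \<le> m \<and> m < P I + c I \<and> m mod N = j}" for j
    have cle: "real (c I) \<le> N * w I" if "I \<in> G" for I
      using that w01[OF that] N by (simp add: c_def)
    have cge: "N * w I - 1 \<le> real (c I)" if "I \<in> G" for I
      using that w01[OF that] N by (simp add: c_def)
    have cN: "c I \<le> N" for I
    proof (cases "I \<in> G")
      case True
      then have "N * w I \<le> N" using w01[OF True] N by (simp add: mult_left_le)
      then have "\<lfloor>N * w I\<rfloor> \<le> int N" by linarith
      then show ?thesis using True by (simp add: c_def)
    qed (simp add: c_def)
    have EG: "E j \<subseteq> G" for j unfolding E_def by auto
    have carl: "(\<Sum>I\<in>{I\<in>E j. dsub I K}. dlen I) \<le> 3 * dlen K" if K: "K \<in> dyadic" for j K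
    proof -
      define L where "L = fst K + (\<Sum>I\<in>G. fst I)"
      have LG: "fst I \<le> L" if "I \<in> G" for I
        using that G(1) unfolding L_def by (simp add: member_le_sum trans_le_add2)
      have LK: "fst K \<le> L" unfolding L_def by simp
      have leaf: "real (card {I\<in>E j. dsub l I \<and> dsub I K}) \<le> 2 + (\<Sum>I\<in>{I\<in>G. dsub l I \<and> dsub I K}. w I)"
        if l: "l \<in> lv L K" for l
      proof -
        have fl: "fst l = L" using l by (simp add: lv_def)
        have cs: "{I. dsub l I \<and> dsub I K} = anc l ` {fst K..L}" by (rule chain_set[OF l LK])
        define c' where "c' n = c (anc l n)" for n
        define Q where "Q n = (\<Sum>m<n. c' m)" for n
        have PQ: "P (anc l n) = Q n" if "n \<le> L" for n
        proof -
          have "P (anc l n) = (\<Sum>m<n. c (anc (anc l n) m))" by (simp add: P_def anc_def)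
          also have "\<dots> = (\<Sum>m<n. c' m)"
            using that fl by (intro sum.cong refl) (simp add: anc_anc c'_def)
          finally show ?thesis by (simp add: Q_def)
        qed
        have QS: "Q (Suc n) = Q n + c' n" for n by (simp add: Q_def)
        have mem: "anc l n \<in> E j \<longleftrightarrow> (\<exists>m. Q n \<le> m \<and> m < Q (Suc n) \<and> m mod N = j)" if "n \<le> L" for n
        proof -
          have "anc l n \<in> E j \<longleftrightarrow> anc l n \<in> G \<and> (\<exists>m. Q n \<le> m \<and> m < Q n + c' n \<and> m mod N = j)"
            unfolding E_def using PQ[OF that] by (simp add: c'_def)
          also have "\<dots> \<longleftrightarrow> (\<exists>m. Q n \<le> m \<and> m < Q n + c' n \<and> m mod N = j)"
            by (auto simp: c'_def c_def)
          finally show ?thesis by (simp add: QS)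
        qed
        have s1: "{I\<in>E j. dsub l I \<and> dsub I K} = anc l ` {n\<in>{fst K..L}. anc l n \<in> E j}"
        proof -
          have "{I\<in>E j. dsub l I \<and> dsub I K} = {I. dsub l I \<and> dsub I K} \<inter> E j" by auto
          also have "\<dots> = anc l ` {fst K..L} \<inter> E j" using cs by simp
          also have "\<dots> = anc l ` {n\<in>{fst K..L}. anc l n \<in> E j}" by auto
          finally show ?thesis .
        qed
        have "card {I\<in>E j. dsub l I \<and> dsub I K} = card {n\<in>{fst K..L}. anc l n \<in> E j}"
          unfolding s1 by (rule card_image) (meson inj_anc inj_on_subset subset_UNIV)
        also have "{n\<in>{fst K..L}. anc l n \<in> E j} = {n\<in>{fst K..L}. \<exists>m. Q n \<le> m \<and> m < Q (Suc n) \<and> m mod N = j}"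
          using mem by auto
        finally have "real (card {I\<in>E j. dsub l I \<and> dsub I K}) \<le> (\<Sum>n\<in>{fst K..L}. real (c' n)) / N + 2"
          using chain_count[OF N, where c=c' and j=j and l="fst K" and L=L] unfolding Q_def by simp
        also have "(\<Sum>n\<in>{fst K..L}. real (c' n)) / N \<le> (\<Sum>n\<in>{fst K..L}. if anc l n \<in> G then w (anc l n) else 0)"
        proof -
          have "(\<Sum>n\<in>{fst K..L}. real (c' n)) \<le> (\<Sum>n\<in>{fst K..L}. N * (if anc l n \<in> G then w (anc l n) else 0))"
            by (intro sum_mono) (auto simp: c'_def cle, simp add: c_def)
          then show ?thesis using N by (simp add: sum_distrib_left[symmetric] divide_le_eq mult.commute)
        qed
        also have "(\<Sum>n\<in>{fst K..L}. if anc l n \<in> G then w (anc l n) else 0) = (\<Sum>n\<in>{n\<in>{fst K..L}. anc l n \<in> G}. w (anc l n))"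
          by (simp add: sum.inter_filter[symmetric])
        also have "\<dots> = (\<Sum>I\<in>anc l ` {n\<in>{fst K..L}. anc l n \<in> G}. w I)"
          by (rule sum.reindex[symmetric, unfolded comp_def]) (meson inj_anc inj_on_subset subset_UNIV)
        also have "anc l ` {n\<in>{fst K..L}. anc l n \<in> G} = {I\<in>G. dsub l I \<and> dsub I K}"
        proof -
          have "{I\<in>G. dsub l I \<and> dsub I K} = {I. dsub l I \<and> dsub I K} \<inter> G" by auto
          also have "\<dots> = anc l ` {fst K..L} \<inter> G" using cs by simp
          also have "\<dots> = anc l ` {n\<in>{fst K..L}. anc l n \<in> G}" by auto
          finally show ?thesis by simp
        qed
        finally show ?thesis by simp
      qed
      have "(\<Sum>I\<in>{I\<in>E j. dsub I K}. dlen I) = (\<Sum>I\<in>{I\<in>E j. dsub I K}. 1 * dlen I)" by simp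
      also have "\<dots> = (\<Sum>l\<in>lv L K. (1/2)^L * (\<Sum>I\<in>{I\<in>E j. dsub l I \<and> dsub I K}. 1))"
        by (rule leaf_sum) (use finite_subset[OF EG[of j] G(1)] EG[of j] LG LK in auto)
      also have "\<dots> \<le> (\<Sum>l\<in>lv L K. (1/2)^L * (2 + (\<Sum>I\<in>{I\<in>G. dsub l I \<and> dsub I K}. w I)))"
        using leaf by (intro sum_mono mult_left_mono) auto
      also have "\<dots> = 2 * (\<Sum>l\<in>lv L K. (1/2)^L) + (\<Sum>l\<in>lv L K. (1/2)^L * (\<Sum>I\<in>{I\<in>G. dsub l I \<and> dsub I K}. w I))"
        by (simp add: algebra_simps sum.distrib sum_distrib_left)
      also have "(\<Sum>l\<in>lv L K. (1/2)^L * (\<Sum>I\<in>{I\<in>G. dsub l I \<and> dsub I K}. w I)) = (\<Sum>I\<in>{I\<in>G. dsub I K}. w I * dlen I)"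
        by (rule leaf_sum[symmetric]) (use G LG LK in auto)
      also have "(\<Sum>l\<in>lv L K. (1/2::real)^L) = dlen K" by (rule sum_lv[OF LK])
      finally show ?thesis using wC[OF K] by simp
    qed
    have Ebound: "(\<Sum>I\<in>E j. \<nu> I) \<le> B" for j
      by (rule hyp[OF EG]) (rule carl)
    have "(\<Sum>j<N. \<Sum>I\<in>E j. \<nu> I) = (\<Sum>j<N. \<Sum>I\<in>{I\<in>G. I \<in> E j}. \<nu> I)"
    proof -
      have "{I\<in>G. I \<in> E j} = E j" for j using EG[of j] by auto
      then show ?thesis by simp
    qed
    also have "\<dots> = (\<Sum>I\<in>G. \<Sum>j\<in>{j\<in>{..<N}. I \<in> E j}. \<nu> I)"
      by (rule sum.swap_restrict[symmetric]) (use G in auto)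
    also have "\<dots> = (\<Sum>I\<in>G. \<nu> I * c I)"
    proof (rule sum.cong[OF refl])
      fix I assume I: "I \<in> G"
      have "{j\<in>{..<N}. I \<in> E j} = {j\<in>{..<N}. \<exists>m. P I \<le> m \<and> m < P I + c I \<and> m mod N = j}"
        using I by (auto simp: E_def)
      then have "card {j\<in>{..<N}. I \<in> E j} = c I" using card_mod_image[OF cN] by simp
      then show "(\<Sum>j\<in>{j\<in>{..<N}. I \<in> E j}. \<nu> I) = \<nu> I * c I" by simp
    qed
    finally have A: "(\<Sum>I\<in>G. \<nu> I * c I) \<le> N * B"
      using sum_mono[of "{..<N}" "\<lambda>j. \<Sum>I\<in>E j. \<nu> I" "\<lambda>_. B", OF Ebound] by simp
    have "(\<Sum>I\<in>G. \<nu> I * (N * w I - 1)) \<le> (\<Sum>I\<in>G. \<nu> I * c I)"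
      using \<nu> cge by (intro sum_mono mult_left_mono) auto
    also have "(\<Sum>I\<in>G. \<nu> I * (N * w I - 1)) = N * (\<Sum>I\<in>G. w I * \<nu> I) - (\<Sum>I\<in>G. \<nu> I)"
      by (simp add: algebra_simps sum_subtractf sum_distrib_left)
    finally have "N * (\<Sum>I\<in>G. w I * \<nu> I) \<le> N * B + (\<Sum>I\<in>G. \<nu> I)" using A by linarith
    then show ?thesis using N by (simp add: field_simps)
  qed
  show ?thesis
  proof (rule ccontr)
    assume "\<not> ?thesis"
    then have d: "0 < (\<Sum>I\<in>G. w I * \<nu> I) - B" by simp
    obtain N :: nat where "(\<Sum>I\<in>G. \<nu> I) / ((\<Sum>I\<in>G. w I * \<nu> I) - B) < N" using reals_Archimedean2 by blast
    moreover have "0 \<le> (\<Sum>I\<in>G. \<nu> I)" using \<nu> by (simp add: sum_nonneg)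
    ultimately have N: "N > 0" and "(\<Sum>I\<in>G. \<nu> I) < N * ((\<Sum>I\<in>G. w I * \<nu> I) - B)"
      using d by (auto simp: divide_less_eq mult.commute intro: Nat.gr0I)
    then have "(\<Sum>I\<in>G. \<nu> I) / N < (\<Sum>I\<in>G. w I * \<nu> I) - B" by (simp add: divide_less_eq mult.commute)
    then show False using key[OF N] by linarith
  qed
qed



lemma div_le_ennreal:
  assumes "0 < d" shows "(a / ennreal d \<le> c) \<longleftrightarrow> (a \<le> c * ennreal d)"
proof
  assume "a / ennreal d \<le> c"
  then have "a / ennreal d * ennreal d \<le> c * ennreal d" by (rule mult_right_mono) simp
  moreover have "a / ennreal d * ennreal d = a" using assms
    by (simp add: ennreal_divide_times divide_eq_1_ennreal ennreal_times_divide)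
  ultimately show "a \<le> c * ennreal d" by simp
next
  assume "a \<le> c * ennreal d"
  then show "a / ennreal d \<le> c" using assms by (intro divide_le_posI_ennreal) (auto simp: mult.commute)
qed

lemma nn_finite_le:
  fixes f :: "'a \<Rightarrow> ennreal"
  assumes "finite F" "F \<subseteq> A"
  shows "(\<Sum>I\<in>F. f I) \<le> (\<integral>\<^sup>+I. f I \<partial>count_space A)"
proof -
  have "(\<Sum>I\<in>F. f I) = (\<integral>\<^sup>+I. f I \<partial>count_space F)" using assms by (simp add: nn_integral_count_space_finite)
  also have "\<dots> = (\<integral>\<^sup>+I. f I * indicator F I \<partial>count_space UNIV)"
    by (rule nn_integral_count_space_indicator) simp
  also have "\<dots> \<le> (\<integral>\<^sup>+I. f I * indicator A I \<partial>count_space UNIV)"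
    using assms by (intro nn_integral_mono) (auto split: split_indicator)
  also have "\<dots> = (\<integral>\<^sup>+I. f I \<partial>count_space A)"
    by (rule nn_integral_count_space_indicator[symmetric]) simp
  finally show ?thesis .
qed

lemma nn_le_of_finite:
  fixes f :: "'a \<Rightarrow> ennreal"
  assumes "countable A" "\<And>F. finite F \<Longrightarrow> F \<subseteq> A \<Longrightarrow> (\<Sum>I\<in>F. f I) \<le> B"
  shows "(\<integral>\<^sup>+I. f I \<partial>count_space A) \<le> B"
proof (cases "finite A")
  case True
  then show ?thesis using assms(2)[of A] by (simp add: nn_integral_count_space_finite)
next
  case False
  have bij: "bij_betw (from_nat_into A) UNIV A" by (rule bij_betw_from_nat_into[OF assms(1) False])
  have "(\<integral>\<^sup>+I. f I \<partial>count_space A) = (\<integral>\<^sup>+n. f (from_nat_into A n) \<partial>count_space UNIV)"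
    by (rule nn_integral_bij_count_space[symmetric, OF bij])
  also have "\<dots> = (\<Sum>n. f (from_nat_into A n))" by (rule nn_integral_count_space_nat)
  also have "\<dots> \<le> B"
  proof (rule suminf_le_const)
    show "summable (\<lambda>n. f (from_nat_into A n))" by simp
    fix n
    have inj: "inj_on (from_nat_into A) {..<n}" using bij by (meson bij_betw_def inj_on_subset subset_UNIV)
    have "(\<Sum>i<n. f (from_nat_into A i)) = (\<Sum>I\<in>from_nat_into A ` {..<n}. f I)"
      by (simp add: sum.reindex[OF inj])
    also have "\<dots> \<le> B" using bij by (intro assms(2)) (auto simp: bij_betw_def)
    finally show "(\<Sum>i<n. f (from_nat_into A i)) \<le> B" .
  qed
  finally show ?thesis .
qed

lemma ennsqrt_le:
  assumes "e \<le> ennreal (g\<^sup>2)" "0 \<le> g" shows "ennsqrt e \<le> ennreal g"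
proof -
  have "e \<noteq> \<infinity>" using assms(1) by (auto simp: top_unique)
  then have "enn2real e \<le> g\<^sup>2" using assms by (simp add: enn2real_leI)
  then have "sqrt (enn2real e) \<le> g" using assms(2) by (simp add: real_sqrt_le_iff' power2_eq_square real_le_lsqrt)
  then show ?thesis using \<open>e \<noteq> \<infinity>\<close> by (simp add: ennsqrt_def ennreal_leI)
qed

lemma ennsqrt_leD:
  assumes "ennsqrt e \<le> ennreal g" "0 \<le> g" shows "e \<le> ennreal (g\<^sup>2)"
proof -
  have "e \<noteq> \<infinity>" using assms(1) by (auto simp: ennsqrt_def top_unique)
  then have "sqrt (enn2real e) \<le> g" using assms by (simp add: ennsqrt_def)
  then have "enn2real e \<le> g\<^sup>2" by (metis enn2real_nonneg real_sqrt_le_iff sqrt_le_D)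
  moreover have "e = ennreal (enn2real e)" using \<open>e \<noteq> \<infinity>\<close> by (simp add: less_top[symmetric])
  ultimately show ?thesis by (metis ennreal_leI)
qed



lemma dlen_pos: "0 < dlen I" by (simp add: dlen_def)

lemma carl_ub:
  assumes "carleson X \<le> ennreal c" "0 \<le> c" "K \<in> dyadic" "finite F" "F \<subseteq> X \<inter> dyadic"
  shows "(\<Sum>I\<in>{I\<in>F. dsub I K}. dlen I) \<le> c * dlen K"
proof -
  let ?S = "\<integral>\<^sup>+ I. ennreal (dlen I) \<partial>count_space {I \<in> X \<inter> dyadic. dsub I K}"
  have "ennreal (\<Sum>I\<in>{I\<in>F. dsub I K}. dlen I) = (\<Sum>I\<in>{I\<in>F. dsub I K}. ennreal (dlen I))"
    by (simp add: dlen_pos less_imp_le)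
  also have "\<dots> \<le> ?S" using assms by (intro nn_finite_le) auto
  also have "?S \<le> ennreal c * ennreal (dlen K)"
  proof -
    have "?S / ennreal (dlen K) \<le> carleson X" unfolding carleson_def using assms(3) by (rule SUP_upper)
    then have "?S / ennreal (dlen K) \<le> ennreal c" using assms(1) by simp
    then show ?thesis using div_le_ennreal[OF dlen_pos] by simp
  qed
  also have "\<dots> = ennreal (c * dlen K)" using assms(2) by (simp add: ennreal_mult'' dlen_pos less_imp_le)
  finally show ?thesis using assms(2) dlen_pos[of K] by simp
qed

lemma carl_lb:
  assumes "0 \<le> c"
    and "\<And>K F. K \<in> dyadic \<Longrightarrow> finite F \<Longrightarrow> F \<subseteq> X \<inter> dyadic \<Longrightarrow> (\<forall>I\<in>F. dsub I K) \<Longrightarrow> (\<Sum>I\<in>F. dlen I) \<le> c * dlen K"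
  shows "carleson X \<le> ennreal c"
  unfolding carleson_def
proof (rule SUP_least)
  fix K assume K: "K \<in> dyadic"
  have "(\<integral>\<^sup>+ I. ennreal (dlen I) \<partial>count_space {I \<in> X \<inter> dyadic. dsub I K}) \<le> ennreal (c * dlen K)"
  proof (rule nn_le_of_finite)
    show "countable {I \<in> X \<inter> dyadic. dsub I K}" by (rule countableI_type)
    fix F assume "finite F" "F \<subseteq> {I \<in> X \<inter> dyadic. dsub I K}"
    then have "(\<Sum>I\<in>F. dlen I) \<le> c * dlen K" using assms(2)[OF K] by auto
    then show "(\<Sum>I\<in>F. ennreal (dlen I)) \<le> ennreal (c * dlen K)"
      by (simp add: dlen_pos less_imp_le ennreal_leI)
  qed
  also have "\<dots> = ennreal c * ennreal (dlen K)" using assms(1) by (simp add: ennreal_mult'' dlen_pos less_imp_le)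
  finally show "(\<integral>\<^sup>+ I. ennreal (dlen I) \<partial>count_space {I \<in> X \<inter> dyadic. dsub I K}) / ennreal (dlen K) \<le> ennreal c"
    using div_le_ennreal[OF dlen_pos] by simp
qed

lemma bmo_ub:
  assumes "bmo_norm x \<le> ennreal b" "0 \<le> b" "K \<in> dyadic" "finite F" "F \<subseteq> {I\<in>dyadic. dsub I K}"
  shows "(\<Sum>I\<in>F. (x I)\<^sup>2 * dlen I) \<le> b\<^sup>2 * dlen K"
proof -
  let ?S = "\<integral>\<^sup>+ I. ennreal ((x I)\<^sup>2 * dlen I) \<partial>count_space {I \<in> dyadic. dsub I K}"
  have "ennreal (\<Sum>I\<in>F. (x I)\<^sup>2 * dlen I) = (\<Sum>I\<in>F. ennreal ((x I)\<^sup>2 * dlen I))"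
    by (simp add: dlen_pos less_imp_le)
  also have "\<dots> \<le> ?S" using assms by (intro nn_finite_le) auto
  also have "?S \<le> ennreal (b\<^sup>2) * ennreal (dlen K)"
  proof -
    have "ennsqrt (?S / ennreal (dlen K)) \<le> bmo_norm x" unfolding bmo_norm_def using assms(3) by (rule SUP_upper)
    then have "ennsqrt (?S / ennreal (dlen K)) \<le> ennreal b" using assms(1) by simp
    then have "?S / ennreal (dlen K) \<le> ennreal (b\<^sup>2)" using assms(2) by (rule ennsqrt_leD)
    then show ?thesis using div_le_ennreal[OF dlen_pos] by simp
  qed
  also have "\<dots> = ennreal (b\<^sup>2 * dlen K)" by (simp add: ennreal_mult'' dlen_pos less_imp_le)
  finally show ?thesis using dlen_pos[of K] by simp
qed

lemma bmo_lb:
  assumes "0 \<le> g"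
    and "\<And>K F. K \<in> dyadic \<Longrightarrow> finite F \<Longrightarrow> F \<subseteq> {I\<in>dyadic. dsub I K} \<Longrightarrow> (\<Sum>I\<in>F. (y I)\<^sup>2 * dlen I) \<le> g\<^sup>2 * dlen K"
  shows "bmo_norm y \<le> ennreal g"
  unfolding bmo_norm_def
proof (rule SUP_least)
  fix K assume K: "K \<in> dyadic"
  have "(\<integral>\<^sup>+ I. ennreal ((y I)\<^sup>2 * dlen I) \<partial>count_space {I \<in> dyadic. dsub I K}) \<le> ennreal (g\<^sup>2 * dlen K)"
  proof (rule nn_le_of_finite)
    show "countable {I \<in> dyadic. dsub I K}" by (rule countableI_type)
    fix F assume "finite F" "F \<subseteq> {I \<in> dyadic. dsub I K}"
    then have "(\<Sum>I\<in>F. (y I)\<^sup>2 * dlen I) \<le> g\<^sup>2 * dlen K" using assms(2)[OF K] by auto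
    then show "(\<Sum>I\<in>F. ennreal ((y I)\<^sup>2 * dlen I)) \<le> ennreal (g\<^sup>2 * dlen K)"
      by (simp add: dlen_pos less_imp_le ennreal_leI)
  qed
  also have "\<dots> = ennreal (g\<^sup>2) * ennreal (dlen K)" by (simp add: ennreal_mult'' dlen_pos less_imp_le)
  finally have "(\<integral>\<^sup>+ I. ennreal ((y I)\<^sup>2 * dlen I) \<partial>count_space {I \<in> dyadic. dsub I K}) / ennreal (dlen K) \<le> ennreal (g\<^sup>2)"
    using div_le_ennreal[OF dlen_pos] by simp
  then show "ennsqrt ((\<integral>\<^sup>+ I. ennreal ((y I)\<^sup>2 * dlen I) \<partial>count_space {I \<in> dyadic. dsub I K}) / ennreal (dlen K)) \<le> ennreal g"
    using assms(1) by (rule ennsqrt_le)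
qed



lemma rearr_img:
  assumes "inj_on \<tau> dyadic" "I \<in> dyadic"
  shows "rearr_op \<tau> x (\<tau> I) = x I"
  using assms by (simp add: rearr_op_def inv_into_f_f)

lemma rearr_sum:
  assumes inj: "inj_on \<tau> dyadic" and F: "finite F"
  shows "finite {I\<in>dyadic. \<tau> I \<in> F}"
    and "(\<Sum>I\<in>F. (rearr_op \<tau> x I)\<^sup>2 * dlen I) = (\<Sum>I\<in>{I\<in>dyadic. \<tau> I \<in> F}. (x I)\<^sup>2 * dlen (\<tau> I))"
proof -
  let ?G = "{I\<in>dyadic. \<tau> I \<in> F}"
  have injG: "inj_on \<tau> ?G" using inj by (rule inj_on_subset) auto
  have img: "\<tau> ` ?G = F \<inter> \<tau> ` dyadic" by auto
  show finG: "finite ?G"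
    using injG img F by (metis finite_Int finite_imageD)
  have "(\<Sum>I\<in>F. (rearr_op \<tau> x I)\<^sup>2 * dlen I) = (\<Sum>I\<in>F \<inter> \<tau> ` dyadic. (rearr_op \<tau> x I)\<^sup>2 * dlen I)"
    using F by (intro sum.mono_neutral_right) (auto simp: rearr_op_def)
  also have "\<dots> = (\<Sum>I\<in>\<tau> ` ?G. (rearr_op \<tau> x I)\<^sup>2 * dlen I)" by (simp only: img)
  also have "\<dots> = (\<Sum>I\<in>?G. (rearr_op \<tau> x (\<tau> I))\<^sup>2 * dlen (\<tau> I))"
    by (rule sum.reindex[OF injG, unfolded comp_def])
  also have "\<dots> = (\<Sum>I\<in>?G. (x I)\<^sup>2 * dlen (\<tau> I))"
    using inj by (intro sum.cong refl) (simp add: rearr_img)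
  finally show "(\<Sum>I\<in>F. (rearr_op \<tau> x I)\<^sup>2 * dlen I) = (\<Sum>I\<in>?G. (x I)\<^sup>2 * dlen (\<tau> I))" .
qed

lemma hypC:
  assumes tD: "\<tau> ` dyadic \<subseteq> dyadic" and inj: "inj_on \<tau> dyadic"
    and hM: "\<forall>E \<subseteq> dyadic. carleson E \<le> 4 \<longrightarrow> carleson (\<tau> ` E) \<le> ennreal M" and M: "0 \<le> M"
    and J: "J \<in> dyadic" and E': "finite E'" "E' \<subseteq> dyadic" and sub: "\<And>I. I \<in> E' \<Longrightarrow> dsub (\<tau> I) J"
    and c3: "\<And>K. K \<in> dyadic \<Longrightarrow> (\<Sum>I\<in>{I\<in>E'. dsub I K}. dlen I) \<le> 3 * dlen K"
  shows "(\<Sum>I\<in>E'. dlen (\<tau> I)) \<le> M * dlen J"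
proof -
  have "carleson E' \<le> ennreal 3"
  proof (rule carl_lb)
    fix K F assume K: "K \<in> dyadic" and F: "finite F" "F \<subseteq> E' \<inter> dyadic" "\<forall>I\<in>F. dsub I K"
    have "(\<Sum>I\<in>F. dlen I) \<le> (\<Sum>I\<in>{I\<in>E'. dsub I K}. dlen I)"
      using F E' by (intro sum_mono2) (auto simp: dlen_pos less_imp_le)
    also have "\<dots> \<le> 3 * dlen K" by (rule c3[OF K])
    finally show "(\<Sum>I\<in>F. dlen I) \<le> 3 * dlen K" .
  qed simp
  also have "ennreal 3 \<le> 4" by simp
  finally have "carleson (\<tau> ` E') \<le> ennreal M" using hM E' by blast
  then have "(\<Sum>I\<in>{I\<in>\<tau> ` E'. dsub I J}. dlen I) \<le> M * dlen J"
    using M J E' tD by (intro carl_ub) auto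
  moreover have "{I\<in>\<tau> ` E'. dsub I J} = \<tau> ` E'" using sub by auto
  moreover have "(\<Sum>I\<in>\<tau> ` E'. dlen I) = (\<Sum>I\<in>E'. dlen (\<tau> I))"
    using inj E' by (intro sum.reindex[unfolded comp_def]) (rule inj_on_subset)
  ultimately show ?thesis by simp
qed



lemma dirAB:
  assumes tD: "\<tau> ` dyadic \<subseteq> dyadic" and inj: "inj_on \<tau> dyadic"
    and C: "C \<ge> 0" and hA: "\<forall>x \<in> BMO. bmo_norm (rearr_op \<tau> x) \<le> ennreal C * bmo_norm x"
  shows "\<exists>M::real. M \<ge> 1 \<and> (\<forall>E \<subseteq> dyadic. carleson (\<tau> ` E) \<le> ennreal M * carleson E)"
proof (intro exI conjI allI impI)
  define M where "M = max 1 (C\<^sup>2)"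
  show "M \<ge> 1" by (simp add: M_def)
  fix E assume ED: "E \<subseteq> dyadic"
  show "carleson (\<tau> ` E) \<le> ennreal M * carleson E"
  proof (cases "carleson E = \<infinity>")
    case True
    have "ennreal M \<noteq> 0" by (simp add: M_def)
    then show ?thesis using True by (simp add: ennreal_mult_top)
  next
    case False
    define \<kappa> where "\<kappa> = enn2real (carleson E)"
    have k0: "0 \<le> \<kappa>" by (simp add: \<kappa>_def)
    have cE: "carleson E = ennreal \<kappa>" using False by (simp add: \<kappa>_def less_top[symmetric])
    define x :: "dint \<Rightarrow> real" where "x = indicator E"
    have bx: "bmo_norm x \<le> ennreal (sqrt \<kappa>)"
    proof (rule bmo_lb)
      fix K F assume K: "K \<in> dyadic" and F: "finite F" "F \<subseteq> {I\<in>dyadic. dsub I K}"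
      have "(\<Sum>I\<in>F. (x I)\<^sup>2 * dlen I) = (\<Sum>I\<in>{I\<in>F \<inter> E. dsub I K}. dlen I)"
      proof -
        have "(\<Sum>I\<in>F. (x I)\<^sup>2 * dlen I) = (\<Sum>I\<in>F. if I \<in> E then dlen I else 0)"
          by (intro sum.cong refl) (simp add: x_def indicator_def)
        also have "\<dots> = (\<Sum>I\<in>F \<inter> E. dlen I)" using F by (simp add: sum.If_cases Int_def)
        also have "F \<inter> E = {I\<in>F \<inter> E. dsub I K}" using F by auto
        finally show ?thesis .
      qed
      also have "\<dots> \<le> \<kappa> * dlen K"
        using cE k0 K F ED by (intro carl_ub[where X=E]) auto
      finally show "(\<Sum>I\<in>F. (x I)\<^sup>2 * dlen I) \<le> (sqrt \<kappa>)\<^sup>2 * dlen K" using k0 by simp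
    qed (simp add: k0)
    then have "x \<in> BMO" by (auto simp: BMO_def top_unique intro: le_less_trans)
    then have "bmo_norm (rearr_op \<tau> x) \<le> ennreal C * bmo_norm x" using hA by blast
    also have "\<dots> \<le> ennreal C * ennreal (sqrt \<kappa>)" using bx by (rule mult_left_mono) simp
    also have "\<dots> = ennreal (C * sqrt \<kappa>)" by (rule ennreal_mult'[OF C, symmetric])
    finally have bT: "bmo_norm (rearr_op \<tau> x) \<le> ennreal (C * sqrt \<kappa>)" .
    have "carleson (\<tau> ` E) \<le> ennreal (C\<^sup>2 * \<kappa>)"
    proof (rule carl_lb)
      fix K F assume K: "K \<in> dyadic" and F: "finite F" "F \<subseteq> \<tau> ` E \<inter> dyadic" "\<forall>I\<in>F. dsub I K"
      have "(\<Sum>I\<in>F. dlen I) = (\<Sum>I\<in>F. (rearr_op \<tau> x I)\<^sup>2 * dlen I)"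
      proof (intro sum.cong refl)
        fix I assume "I \<in> F"
        then obtain I0 where "I0 \<in> E" "I = \<tau> I0" using F by auto
        then have "rearr_op \<tau> x I = 1" using inj ED by (auto simp: rearr_img x_def)
        then show "dlen I = (rearr_op \<tau> x I)\<^sup>2 * dlen I" by simp
      qed
      also have "\<dots> \<le> (C * sqrt \<kappa>)\<^sup>2 * dlen K"
        using bT C k0 K F by (intro bmo_ub) auto
      also have "\<dots> = C\<^sup>2 * \<kappa> * dlen K" using k0 by (simp add: power_mult_distrib)
      finally show "(\<Sum>I\<in>F. dlen I) \<le> C\<^sup>2 * \<kappa> * dlen K" .
    qed (simp add: k0)
    also have "ennreal (C\<^sup>2 * \<kappa>) \<le> ennreal (M * \<kappa>)"
      using k0 by (intro ennreal_leI mult_right_mono) (auto simp: M_def)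
    also have "\<dots> = ennreal M * carleson E" unfolding cE by (rule ennreal_mult''[OF k0])
    finally show ?thesis .
  qed
qed

lemma dirBC:
  assumes "M \<ge> 1" and hB: "\<forall>E \<subseteq> dyadic. carleson (\<tau> ` E) \<le> ennreal M * carleson E"
  shows "\<exists>M::real. M \<ge> 1 \<and> (\<forall>E \<subseteq> dyadic. carleson E \<le> 4 \<longrightarrow> carleson (\<tau> ` E) \<le> ennreal M)"
proof (intro exI conjI allI impI)
  show "4 * M \<ge> 1" using assms(1) by simp
  fix E assume "E \<subseteq> dyadic" "carleson E \<le> 4"
  then have "carleson (\<tau> ` E) \<le> ennreal M * carleson E" using hB by blast
  also have "\<dots> \<le> ennreal M * 4" using \<open>carleson E \<le> 4\<close> by (rule mult_left_mono) simp
  also have "\<dots> = ennreal (M * 4)" by (simp add: ennreal_mult'')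
  also have "\<dots> = ennreal (4 * M)" by (simp add: mult.commute)
  finally show "carleson (\<tau> ` E) \<le> ennreal (4 * M)" .
qed



lemma dirCB:
  assumes tD: "\<tau> ` dyadic \<subseteq> dyadic" and inj: "inj_on \<tau> dyadic"
    and M: "M \<ge> 1" and hM: "\<forall>E \<subseteq> dyadic. carleson E \<le> 4 \<longrightarrow> carleson (\<tau> ` E) \<le> ennreal M"
  shows "\<exists>M::real. M \<ge> 1 \<and> (\<forall>E \<subseteq> dyadic. carleson (\<tau> ` E) \<le> ennreal M * carleson E)"
proof (intro exI conjI allI impI)
  show "M \<ge> 1" by fact
  fix E assume ED: "E \<subseteq> dyadic"
  show "carleson (\<tau> ` E) \<le> ennreal M * carleson E"
  proof (cases "E = {}")
    case True
    have "carleson (\<tau> ` E) \<le> ennreal 0" using True by (intro carl_lb) auto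
    then show ?thesis by simp
  next
    case False
    then obtain I0 where I0: "I0 \<in> E" by auto
    show ?thesis
    proof (cases "carleson E = \<infinity>")
      case True
      have "ennreal M \<noteq> 0" using M by simp
      then show ?thesis using True by (simp add: ennreal_mult_top)
    next
      case False
      define \<kappa> where "\<kappa> = enn2real (carleson E)"
      have k0: "0 \<le> \<kappa>" by (simp add: \<kappa>_def)
      have cE: "carleson E = ennreal \<kappa>" using False by (simp add: \<kappa>_def less_top[symmetric])
      have "(\<Sum>I\<in>{I\<in>{I0}. dsub I I0}. dlen I) \<le> \<kappa> * dlen I0"
        using cE k0 I0 ED by (intro carl_ub[where X=E]) auto
      moreover have "{I\<in>{I0}. dsub I I0} = {I0}" by (auto simp: dsub_refl)
      ultimately have "dlen I0 \<le> \<kappa> * dlen I0" by simp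
      then have k1: "1 \<le> \<kappa>" using dlen_pos[of I0] by simp
      have "carleson (\<tau> ` E) \<le> ennreal (M * \<kappa>)"
      proof (rule carl_lb)
        fix J F' assume J: "J \<in> dyadic" and F': "finite F'" "F' \<subseteq> \<tau> ` E \<inter> dyadic" "\<forall>I\<in>F'. dsub I J"
        define G where "G = {I\<in>E. \<tau> I \<in> F'}"
        have GE: "G \<subseteq> E" by (auto simp: G_def)
        have injG: "inj_on \<tau> G" using inj GE ED by (meson inj_on_subset order_trans)
        have imgG: "\<tau> ` G = F'" using F' by (auto simp: G_def)
        have finG: "finite G" using injG imgG F' by (metis finite_imageD)
        have sumF: "(\<Sum>I\<in>F'. dlen I) = (\<Sum>I\<in>G. dlen (\<tau> I))"
          unfolding imgG[symmetric] by (rule sum.reindex[OF injG, unfolded comp_def])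
        have "(\<Sum>I\<in>G. (1/\<kappa>) * dlen (\<tau> I)) \<le> M * dlen J"
        proof (rule rounding)
          show "finite G" by fact
          show "G \<subseteq> dyadic" using GE ED by auto
          show "0 \<le> 1/\<kappa> \<and> 1/\<kappa> \<le> 1" for I using k1 by simp
          show "0 \<le> dlen (\<tau> I)" for I by (simp add: dlen_pos less_imp_le)
          fix K assume K: "K \<in> dyadic"
          have "(\<Sum>I\<in>{I\<in>G. dsub I K}. dlen I) \<le> \<kappa> * dlen K"
            using cE k0 K finG GE ED by (intro carl_ub[where X=E]) auto
          then have "(\<Sum>I\<in>{I\<in>G. dsub I K}. dlen I) / \<kappa> \<le> dlen K"
            using k1 by (simp add: divide_le_eq mult.commute)
          then show "(\<Sum>I\<in>{I\<in>G. dsub I K}. 1/\<kappa> * dlen I) \<le> dlen K"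
            by (simp add: sum_divide_distrib)
        next
          fix E' assume E': "E' \<subseteq> G" and c3: "\<And>K. K \<in> dyadic \<Longrightarrow> (\<Sum>I\<in>{I\<in>E'. dsub I K}. dlen I) \<le> 3 * dlen K"
          show "(\<Sum>I\<in>E'. dlen (\<tau> I)) \<le> M * dlen J"
          proof (rule hypC[OF tD inj hM _ J])
            show "0 \<le> M" using M by simp
            show "finite E'" using E' finG by (rule finite_subset)
            show "E' \<subseteq> dyadic" using E' GE ED by auto
            show "dsub (\<tau> I) J" if "I \<in> E'" for I using that E' F' by (auto simp: G_def)
          qed (rule c3)
        qed
        then have "(\<Sum>I\<in>G. dlen (\<tau> I)) / \<kappa> \<le> M * dlen J" by (simp add: sum_divide_distrib)
        then have "(\<Sum>I\<in>G. dlen (\<tau> I)) \<le> M * \<kappa> * dlen J" using k1 by (simp add: divide_le_eq algebra_simps)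
        then show "(\<Sum>I\<in>F'. dlen I) \<le> M * \<kappa> * dlen J" using sumF by simp
      qed (use M k0 in simp)
      also have "\<dots> = ennreal M * carleson E" unfolding cE by (rule ennreal_mult''[OF k0])
      finally show ?thesis .
    qed
  qed
qed

lemma dirCA:
  assumes tD: "\<tau> ` dyadic \<subseteq> dyadic" and inj: "inj_on \<tau> dyadic"
    and M: "M \<ge> 1" and hM: "\<forall>E \<subseteq> dyadic. carleson E \<le> 4 \<longrightarrow> carleson (\<tau> ` E) \<le> ennreal M"
  shows "\<exists>C::real. C \<ge> 0 \<and> (\<forall>x \<in> BMO. bmo_norm (rearr_op \<tau> x) \<le> ennreal C * bmo_norm x)"
proof (intro exI conjI ballI)
  show "sqrt M \<ge> 0" using M by simp
  fix x assume "x \<in> BMO"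
  then have fin: "bmo_norm x \<noteq> \<infinity>" by (simp add: BMO_def)
  define \<beta> where "\<beta> = enn2real (bmo_norm x)"
  have b0: "0 \<le> \<beta>" by (simp add: \<beta>_def)
  have bx: "bmo_norm x = ennreal \<beta>" using fin by (simp add: \<beta>_def less_top[symmetric])
  have bxle: "bmo_norm x \<le> ennreal \<beta>" using bx by simp
  have pt: "(x I)\<^sup>2 \<le> \<beta>\<^sup>2" if "I \<in> dyadic" for I
  proof -
    have "(\<Sum>I\<in>{I}. (x I)\<^sup>2 * dlen I) \<le> \<beta>\<^sup>2 * dlen I"
      using bxle b0 that by (intro bmo_ub) (auto simp: dsub_refl)
    then show ?thesis using dlen_pos[of I] by simp
  qed
  have "bmo_norm (rearr_op \<tau> x) \<le> ennreal (sqrt M * \<beta>)"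
  proof (rule bmo_lb)
    show "0 \<le> sqrt M * \<beta>" using M b0 by simp
    fix K F' assume K: "K \<in> dyadic" and F': "finite F'" "F' \<subseteq> {I\<in>dyadic. dsub I K}"
    define G where "G = {I\<in>dyadic. \<tau> I \<in> F'}"
    have finG: "finite G" unfolding G_def by (rule rearr_sum(1)[OF inj F'(1)])
    have eq: "(\<Sum>I\<in>F'. (rearr_op \<tau> x I)\<^sup>2 * dlen I) = (\<Sum>I\<in>G. (x I)\<^sup>2 * dlen (\<tau> I))"
      unfolding G_def by (rule rearr_sum(2)[OF inj F'(1)])
    have main: "(\<Sum>I\<in>G. (x I)\<^sup>2 * dlen (\<tau> I)) \<le> \<beta>\<^sup>2 * (M * dlen K)"
    proof (cases "\<beta> = 0")
      case True
      then have z: "(x I)\<^sup>2 * dlen (\<tau> I) = 0" if "I \<in> G" for I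
        using pt[of I] that by (simp add: G_def)
      have "(\<Sum>I\<in>G. (x I)\<^sup>2 * dlen (\<tau> I)) = 0" by (rule sum.neutral) (use z in blast)
      then show ?thesis using True by simp
    next
      case False
      then have bp: "0 < \<beta>\<^sup>2" using b0 by simp
      have "(\<Sum>I\<in>G. ((x I)\<^sup>2 / \<beta>\<^sup>2) * dlen (\<tau> I)) \<le> M * dlen K"
      proof (rule rounding)
        show "finite G" by fact
        show "G \<subseteq> dyadic" by (auto simp: G_def)
        show "0 \<le> (x I)\<^sup>2 / \<beta>\<^sup>2 \<and> (x I)\<^sup>2 / \<beta>\<^sup>2 \<le> 1" if "I \<in> G" for I
          using pt[of I] that bp by (auto simp: G_def)
        show "0 \<le> dlen (\<tau> I)" for I by (simp add: dlen_pos less_imp_le)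
        fix K' assume K': "K' \<in> dyadic"
        have "(\<Sum>I\<in>{I\<in>G. dsub I K'}. (x I)\<^sup>2 * dlen I) \<le> \<beta>\<^sup>2 * dlen K'"
          using bxle b0 K' finite_subset[OF _ finG, of "{I\<in>G. dsub I K'}"] by (intro bmo_ub) (auto simp: G_def)
        then show "(\<Sum>I\<in>{I\<in>G. dsub I K'}. (x I)\<^sup>2 / \<beta>\<^sup>2 * dlen I) \<le> dlen K'"
          using bp by (simp add: sum_divide_distrib[symmetric] divide_le_eq mult.commute)
      next
        fix E' assume E': "E' \<subseteq> G" and c3: "\<And>K. K \<in> dyadic \<Longrightarrow> (\<Sum>I\<in>{I\<in>E'. dsub I K}. dlen I) \<le> 3 * dlen K"
        show "(\<Sum>I\<in>E'. dlen (\<tau> I)) \<le> M * dlen K"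
        proof (rule hypC[OF tD inj hM _ K])
          show "0 \<le> M" using M by simp
          show "finite E'" using E' finG by (rule finite_subset)
          show "E' \<subseteq> dyadic" using E' by (auto simp: G_def)
          show "dsub (\<tau> I) K" if "I \<in> E'" for I using that E' F' by (auto simp: G_def)
        qed (rule c3)
      qed
      then have "(\<Sum>I\<in>G. (x I)\<^sup>2 * dlen (\<tau> I)) / \<beta>\<^sup>2 \<le> M * dlen K"
        by (simp add: sum_divide_distrib)
      then show ?thesis using bp by (simp add: divide_le_eq mult.commute)
    qed
    show "(\<Sum>I\<in>F'. (rearr_op \<tau> x I)\<^sup>2 * dlen I) \<le> (sqrt M * \<beta>)\<^sup>2 * dlen K"
      using eq main M by (simp add: power_mult_distrib algebra_simps)
  qed
  also have "\<dots> = ennreal (sqrt M) * bmo_norm x" unfolding bx by (rule ennreal_mult''[OF b0])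
  finally show "bmo_norm (rearr_op \<tau> x) \<le> ennreal (sqrt M) * bmo_norm x" .
qed


theorem proposition2:
  fixes \<tau> :: "dint \<Rightarrow> dint"
  assumes "\<tau> ` dyadic \<subseteq> dyadic" and "inj_on \<tau> dyadic"
  shows "((\<exists>C::real. C \<ge> 0 \<and> (\<forall>x \<in> BMO. bmo_norm (rearr_op \<tau> x) \<le> ennreal C * bmo_norm x))
          \<longleftrightarrow> (\<exists>M::real. M \<ge> 1 \<and> (\<forall>E \<subseteq> dyadic. carleson (\<tau> ` E) \<le> ennreal M * carleson E)))
       \<and> ((\<exists>M::real. M \<ge> 1 \<and> (\<forall>E \<subseteq> dyadic. carleson (\<tau> ` E) \<le> ennreal M * carleson E))
          \<longleftrightarrow> (\<exists>M::real. M \<ge> 1 \<and> (\<forall>E \<subseteq> dyadic. carleson E \<le> 4 \<longrightarrow> carleson (\<tau> ` E) \<le> ennreal M)))"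
proof -
  have AB: "\<exists>M::real. M \<ge> 1 \<and> (\<forall>E \<subseteq> dyadic. carleson (\<tau> ` E) \<le> ennreal M * carleson E)"
    if "\<exists>C::real. C \<ge> 0 \<and> (\<forall>x \<in> BMO. bmo_norm (rearr_op \<tau> x) \<le> ennreal C * bmo_norm x)"
    using that dirAB[OF assms] by blast
  have BC: "\<exists>M::real. M \<ge> 1 \<and> (\<forall>E \<subseteq> dyadic. carleson E \<le> 4 \<longrightarrow> carleson (\<tau> ` E) \<le> ennreal M)"
    if "\<exists>M::real. M \<ge> 1 \<and> (\<forall>E \<subseteq> dyadic. carleson (\<tau> ` E) \<le> ennreal M * carleson E)"
    using that dirBC by blast
  have CB: "\<exists>M::real. M \<ge> 1 \<and> (\<forall>E \<subseteq> dyadic. carleson (\<tau> ` E) \<le> ennreal M * carleson E)"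
    if "\<exists>M::real. M \<ge> 1 \<and> (\<forall>E \<subseteq> dyadic. carleson E \<le> 4 \<longrightarrow> carleson (\<tau> ` E) \<le> ennreal M)"
    using that dirCB[OF assms] by blast
  have CA: "\<exists>C::real. C \<ge> 0 \<and> (\<forall>x \<in> BMO. bmo_norm (rearr_op \<tau> x) \<le> ennreal C * bmo_norm x)"
    if "\<exists>M::real. M \<ge> 1 \<and> (\<forall>E \<subseteq> dyadic. carleson E \<le> 4 \<longrightarrow> carleson (\<tau> ` E) \<le> ennreal M)"
    using that dirCA[OF assms] by blast
  show ?thesis using AB BC CB CA by blast
qed

end
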